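(* Let $E$ be a Banach lattice. Then the norm topology and the unbounded norm topology on $E$ are both locally interval complete solidly submetrisable.
   Context: All vector lattices are real and Archimedean; linear topologies are Hausdorff. A locally solid topology on a vector lattice is a linear topology such that zero has a neighbourhood basis of solid sets. For a Banach lattice $E$ with norm topology $\tau$, the unbounded norm topology (un-topology) is the locally solid topology on $E$ having as neighbourhood basis at zero the sets $\{x\in E: \| |x|\wedge|y| \|<\varepsilon\}$ for $\varepsilon>0$ and $y\in E$. For $x\in E$, $B_x$ denotes the band generated by $x$. A locally solid topology $\tau$ on $E$ is locally interval complete solidly submetrisable if for every $x\in E^+$ there exists a metrisable locally solid topology $\widetilde\tau_x$ on $B_x$ such that (a) $\tau|_{B_x}$ is finer than $\widetilde\tau_x$, and (b) every $\widetilde\tau_x$-Cauchy sequence in $[0,x]$ is $\widetilde\tau_x$-convergent to an element of $[0,x]$. *)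

theory Defs
  imports "HOL-Analysis.Analysis" "HOL-Library.Lattice_Algebras"
begin

class banach_lattice = banach + ordered_real_vector + lattice_ab_group_add_abs +
  assumes norm_lattice_mono: "\<bar>x\<bar> \<le> \<bar>y\<bar> \<Longrightarrow> norm x \<le> norm y"

definition solid_in :: "'a::banach_lattice set \<Rightarrow> 'a set \<Rightarrow> bool" where
  "solid_in L S \<longleftrightarrow> S \<subseteq> L \<and> (\<forall>y\<in>S. \<forall>z\<in>L. \<bar>z\<bar> \<le> \<bar>y\<bar> \<longrightarrow> z \<in> S)"

definition ideal_lat :: "'a::banach_lattice set \<Rightarrow> bool" where
  "ideal_lat B \<longleftrightarrow> 0 \<in> B \<and> (\<forall>a\<in>B. \<forall>b\<in>B. a + b \<in> B) \<and> (\<forall>c. \<forall>a\<in>B. c *\<^sub>R a \<in> B)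
      \<and> solid_in UNIV B"

definition is_band :: "'a::banach_lattice set \<Rightarrow> bool" where
  "is_band B \<longleftrightarrow> ideal_lat B \<and>
     (\<forall>D s. D \<subseteq> B \<and> (\<forall>d\<in>D. d \<le> s) \<and> (\<forall>u. (\<forall>d\<in>D. d \<le> u) \<longrightarrow> s \<le> u) \<longrightarrow> s \<in> B)"

definition band_gen :: "'a::banach_lattice \<Rightarrow> 'a set" where
  "band_gen x = \<Inter>{B. is_band B \<and> x \<in> B}"

definition linear_topology_on :: "'a::banach_lattice set \<Rightarrow> 'a topology \<Rightarrow> bool" where
  "linear_topology_on L T \<longleftrightarrow> topspace T = L \<and> Hausdorff_space T \<and>
     continuous_map (prod_topology T T) T (\<lambda>(a, b). a + b) \<and>
     continuous_map (prod_topology euclideanreal T) T (\<lambda>(c, a). c *\<^sub>R a)"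

definition locally_solid_on :: "'a::banach_lattice set \<Rightarrow> 'a topology \<Rightarrow> bool" where
  "locally_solid_on L T \<longleftrightarrow> linear_topology_on L T \<and>
     (\<forall>U. openin T U \<and> 0 \<in> U \<longrightarrow>
        (\<exists>S V. solid_in L S \<and> openin T V \<and> 0 \<in> V \<and> V \<subseteq> S \<and> S \<subseteq> U))"

definition top_cauchy :: "'a::banach_lattice topology \<Rightarrow> (nat \<Rightarrow> 'a) \<Rightarrow> bool" where
  "top_cauchy T s \<longleftrightarrow> (\<forall>V. openin T V \<and> 0 \<in> V \<longrightarrow>
      (\<exists>N. \<forall>m\<ge>N. \<forall>n\<ge>N. s m - s n \<in> V))"

definition lics_submetrisable :: "'a::banach_lattice topology \<Rightarrow> bool" where
  "lics_submetrisable \<tau> \<longleftrightarrow> locally_solid_on UNIV \<tau> \<and>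
     (\<forall>x. 0 \<le> x \<longrightarrow>
        (\<exists>\<sigma>. locally_solid_on (band_gen x) \<sigma> \<and> metrizable_space \<sigma> \<and>
             (\<forall>U. openin \<sigma> U \<longrightarrow> openin (subtopology \<tau> (band_gen x)) U) \<and>
             (\<forall>s. (\<forall>n. s n \<in> {0..x}) \<and> top_cauchy \<sigma> s \<longrightarrow>
                  (\<exists>l\<in>{0..x}. limitin \<sigma> s l sequentially))))"

definition un_topology :: "'a::banach_lattice topology" where
  "un_topology = topology (\<lambda>U. \<forall>x\<in>U. \<exists>\<epsilon>>0. \<exists>y.
      {z. norm (inf \<bar>z - x\<bar> \<bar>y\<bar>) < \<epsilon>} \<subseteq> U)"

end

theory Submission
  imports Defs
begin


lemma norm_mono_pos:
  fixes a b :: "'a::banach_lattice"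
  assumes "0 \<le> a" "a \<le> b" shows "norm a \<le> norm b"
  by (rule norm_lattice_mono) (use assms in \<open>simp add: abs_of_nonneg\<close>)

lemma norm_abs_lat: fixes a :: "'a::banach_lattice" shows "norm \<bar>a\<bar> = norm a"
  by (metis abs_idempotent norm_lattice_mono order.antisym order.refl)

lemma inf_add_le:
  fixes p q w :: "'a::banach_lattice"
  assumes "0 \<le> p" "0 \<le> q" "0 \<le> w"
  shows "inf (p+q) w \<le> inf p w + inf q w"
proof -
  have "inf (p+q) w \<le> p + w" using assms
    by (meson add_increasing inf.coboundedI2 order.refl)
  moreover have "inf (p+q) w \<le> w + q" using assms
    by (meson add_increasing2 inf.coboundedI2 order.refl)
  moreover have "inf (p+q) w \<le> w + w" using assms
    by (meson add_increasing2 inf.coboundedI2 order.refl)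
  moreover have "inf (p+q) w \<le> p + q" by simp
  ultimately have "inf (p+q) w \<le> p + inf q w" "inf (p+q) w \<le> w + inf q w"
    by (simp_all only: add_inf_distrib_left le_inf_iff)
  then have "inf (p+q) w \<le> inf (p + inf q w) (w + inf q w)" by (rule le_infI)
  also have "\<dots> = inf p w + inf q w" by (simp only: add_inf_distrib_right)
  finally show ?thesis .
qed

lemma scaleR_inf_lat:
  fixes a b :: "'a::banach_lattice"
  assumes "0 \<le> t" shows "t *\<^sub>R inf a b = inf (t *\<^sub>R a) (t *\<^sub>R b)"
proof (cases "t = 0")
  case True then show ?thesis by simp
next
  case False
  then have tp: "0 < t" using assms by simp
  show ?thesis
  proof (rule order.antisym)
    show "t *\<^sub>R inf a b \<le> inf (t *\<^sub>R a) (t *\<^sub>R b)"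
      using assms by (simp add: scaleR_left_mono)
    have "inverse t *\<^sub>R inf (t *\<^sub>R a) (t *\<^sub>R b) \<le> inf a b"
    proof -
      have "inverse t *\<^sub>R inf (t *\<^sub>R a) (t *\<^sub>R b) \<le> inverse t *\<^sub>R (t *\<^sub>R a)"
        using tp by (intro scaleR_left_mono) auto
      moreover have "inverse t *\<^sub>R inf (t *\<^sub>R a) (t *\<^sub>R b) \<le> inverse t *\<^sub>R (t *\<^sub>R b)"
        using tp by (intro scaleR_left_mono) auto
      ultimately show ?thesis using tp by simp
    qed
    then have "t *\<^sub>R (inverse t *\<^sub>R inf (t *\<^sub>R a) (t *\<^sub>R b)) \<le> t *\<^sub>R inf a b"
      using tp by (intro scaleR_left_mono) auto
    then show "inf (t *\<^sub>R a) (t *\<^sub>R b) \<le> t *\<^sub>R inf a b" using tp by simp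
  qed
qed

lemma scaleR_sup_lat:
  fixes a b :: "'a::banach_lattice"
  assumes "0 \<le> t" shows "t *\<^sub>R sup a b = sup (t *\<^sub>R a) (t *\<^sub>R b)"
proof -
  have "t *\<^sub>R sup a b = t *\<^sub>R (- inf (-a) (-b))" by (simp only: sup_eq_neg_inf[of a b])
  also have "\<dots> = - (t *\<^sub>R inf (-a) (-b))" by (rule scaleR_minus_right)
  also have "\<dots> = - inf (t *\<^sub>R (-a)) (t *\<^sub>R (-b))" by (simp only: scaleR_inf_lat[OF assms])
  also have "\<dots> = - inf (- (t *\<^sub>R a)) (- (t *\<^sub>R b))" by (simp only: scaleR_minus_right)
  also have "\<dots> = sup (t *\<^sub>R a) (t *\<^sub>R b)" by (simp only: neg_inf_eq_sup minus_minus)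
  finally show ?thesis .
qed

lemma abs_scaleR_lat:
  fixes a :: "'a::banach_lattice"
  shows "\<bar>c *\<^sub>R a\<bar> = \<bar>c\<bar> *\<^sub>R \<bar>a\<bar>"
proof (cases "0 \<le> c")
  case True
  have "\<bar>c *\<^sub>R a\<bar> = sup (c *\<^sub>R a) (c *\<^sub>R (-a))" by (simp add: abs_lattice[of "c *\<^sub>R a"])
  also have "\<dots> = c *\<^sub>R sup a (-a)" by (simp add: scaleR_sup_lat True)
  also have "\<dots> = c *\<^sub>R \<bar>a\<bar>" by (simp add: abs_lattice[of a])
  finally show ?thesis using True by simp
next
  case False
  have "\<bar>c *\<^sub>R a\<bar> = \<bar>(-c) *\<^sub>R (-a)\<bar>" by simp
  also have "\<dots> = sup ((-c) *\<^sub>R (-a)) (- ((-c) *\<^sub>R (-a)))" by (rule abs_lattice)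
  also have "\<dots> = sup ((-c) *\<^sub>R (-a)) ((-c) *\<^sub>R a)" by (simp only: scaleR_minus_right minus_minus)
  also have "\<dots> = (-c) *\<^sub>R sup (-a) a" by (rule scaleR_sup_lat[symmetric]) (use False in linarith)
  also have "\<dots> = (-c) *\<^sub>R \<bar>a\<bar>" by (simp add: abs_lattice[of a] sup_commute)
  finally have "\<bar>c *\<^sub>R a\<bar> = (-c) *\<^sub>R \<bar>a\<bar>" .
  moreover have "\<bar>c\<bar> = -c" using False by (intro abs_of_neg) linarith
  ultimately show ?thesis by (simp only:)
qed

lemma inf_scale_le:
  fixes w y :: "'a::banach_lattice"
  assumes "1 \<le> t" "0 \<le> y"
  shows "inf (t *\<^sub>R w) y \<le> t *\<^sub>R inf w y"
proof -
  have "y \<le> t *\<^sub>R y" using scaleR_right_mono[OF assms] by simp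
  then have "inf (t *\<^sub>R w) y \<le> inf (t *\<^sub>R w) (t *\<^sub>R y)" by (simp add: le_infI1 inf.coboundedI2)
  also have "\<dots> = t *\<^sub>R inf w y" using assms by (simp add: scaleR_inf_lat)
  finally show ?thesis .
qed



definition lsn :: "('a::banach_lattice \<Rightarrow> real) \<Rightarrow> bool" where
  "lsn p \<longleftrightarrow> (\<forall>z. 0 \<le> p z) \<and> (\<forall>u v. p (u+v) \<le> p u + p v) \<and> (\<forall>u v. \<bar>u\<bar> \<le> \<bar>v\<bar> \<longrightarrow> p u \<le> p v)
     \<and> (\<forall>z. p z \<le> norm z) \<and> (\<forall>c z. p (c *\<^sub>R z) \<le> (\<bar>c\<bar>+1) * p z)"

lemma lsnD:
  assumes "lsn p"
  shows "0 \<le> p z" "p (u+v) \<le> p u + p v" "\<bar>u\<bar> \<le> \<bar>v\<bar> \<Longrightarrow> p u \<le> p v" "p z \<le> norm z"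
    "p (c *\<^sub>R z) \<le> (\<bar>c\<bar>+1) * p z"
  using assms unfolding lsn_def by auto

lemma lsn_minus: "lsn p \<Longrightarrow> p (-z) = p z"
  by (metis abs_minus_cancel lsnD(3) order.antisym order.refl)

lemma lsn_zero: "lsn p \<Longrightarrow> p 0 = 0"
  by (metis lsnD(1) lsnD(4) norm_zero order.antisym)

lemma lsn_tri: "lsn p \<Longrightarrow> p (a - c) \<le> p (a - b) + p (b - c)"
  by (metis diff_add_cancel add_diff_eq lsnD(2))

lemma lsn_commute: "lsn p \<Longrightarrow> p (a - b) = p (b - a)"
  by (metis lsn_minus minus_diff_eq)

lemma lsn_norm: "lsn (norm :: 'a::banach_lattice \<Rightarrow> real)"
  unfolding lsn_def
  by (auto simp: norm_triangle_ineq norm_lattice_mono distrib_right)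

definition pu :: "'a::banach_lattice \<Rightarrow> 'a \<Rightarrow> real" where
  "pu y v = norm (inf \<bar>v\<bar> \<bar>y\<bar>)"

lemma lsn_pu: "lsn (pu y)"
  unfolding lsn_def
proof (intro conjI allI impI)
  fix z :: 'a show "0 \<le> pu y z" by (simp add: pu_def)
next
  fix u v :: 'a
  have "inf \<bar>u+v\<bar> \<bar>y\<bar> \<le> inf (\<bar>u\<bar>+\<bar>v\<bar>) \<bar>y\<bar>" by (intro inf_mono abs_triangle_ineq order.refl)
  also have "\<dots> \<le> inf \<bar>u\<bar> \<bar>y\<bar> + inf \<bar>v\<bar> \<bar>y\<bar>" by (intro inf_add_le) auto
  finally have "norm (inf \<bar>u+v\<bar> \<bar>y\<bar>) \<le> norm (inf \<bar>u\<bar> \<bar>y\<bar> + inf \<bar>v\<bar> \<bar>y\<bar>)"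
    by (intro norm_mono_pos) auto
  also have "\<dots> \<le> norm (inf \<bar>u\<bar> \<bar>y\<bar>) + norm (inf \<bar>v\<bar> \<bar>y\<bar>)" by (rule norm_triangle_ineq)
  finally show "pu y (u+v) \<le> pu y u + pu y v" by (simp add: pu_def)
next
  fix u v :: 'a assume "\<bar>u\<bar> \<le> \<bar>v\<bar>"
  then have "inf \<bar>u\<bar> \<bar>y\<bar> \<le> inf \<bar>v\<bar> \<bar>y\<bar>" by (intro inf_mono order.refl)
  then show "pu y u \<le> pu y v" unfolding pu_def by (intro norm_mono_pos) auto
next
  fix z :: 'a
  have "norm (inf \<bar>z\<bar> \<bar>y\<bar>) \<le> norm \<bar>z\<bar>" by (intro norm_mono_pos) auto
  then show "pu y z \<le> norm z" by (simp add: pu_def norm_abs_lat)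
next
  fix c :: real and z :: 'a
  have "\<bar>c *\<^sub>R z\<bar> = \<bar>c\<bar> *\<^sub>R \<bar>z\<bar>" by (rule abs_scaleR_lat)
  also have "\<dots> \<le> (\<bar>c\<bar>+1) *\<^sub>R \<bar>z\<bar>" by (intro scaleR_right_mono) auto
  finally have "inf \<bar>c *\<^sub>R z\<bar> \<bar>y\<bar> \<le> inf ((\<bar>c\<bar>+1) *\<^sub>R \<bar>z\<bar>) \<bar>y\<bar>" by (intro inf_mono order.refl)
  also have "\<dots> \<le> (\<bar>c\<bar>+1) *\<^sub>R inf \<bar>z\<bar> \<bar>y\<bar>" by (intro inf_scale_le) auto
  finally have "norm (inf \<bar>c *\<^sub>R z\<bar> \<bar>y\<bar>) \<le> norm ((\<bar>c\<bar>+1) *\<^sub>R inf \<bar>z\<bar> \<bar>y\<bar>)"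
    by (intro norm_mono_pos) auto
  also have "\<dots> = (\<bar>c\<bar>+1) * norm (inf \<bar>z\<bar> \<bar>y\<bar>)" by simp
  finally show "pu y (c *\<^sub>R z) \<le> (\<bar>c\<bar>+1) * pu y z" by (simp add: pu_def)
qed

definition pball :: "'a::banach_lattice set \<Rightarrow> ('a \<Rightarrow> real) \<Rightarrow> 'a \<Rightarrow> real \<Rightarrow> 'a set" where
  "pball L p a e = {z \<in> L. p (z - a) < e}"

definition popen :: "'a::banach_lattice set \<Rightarrow> ('a \<Rightarrow> real) set \<Rightarrow> 'a set \<Rightarrow> bool" where
  "popen L P U \<longleftrightarrow> U \<subseteq> L \<and> (\<forall>a\<in>U. \<exists>p\<in>P. \<exists>e>0. pball L p a e \<subseteq> U)"

definition ptop :: "'a::banach_lattice set \<Rightarrow> ('a \<Rightarrow> real) set \<Rightarrow> 'a topology" where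
  "ptop L P = topology (popen L P)"

definition dirp :: "('a \<Rightarrow> real) set \<Rightarrow> bool" where
  "dirp P \<longleftrightarrow> (\<forall>p\<in>P. \<forall>q\<in>P. \<exists>r\<in>P. \<forall>z. p z \<le> r z \<and> q z \<le> r z)"

lemma istop_popen: assumes "dirp P" shows "istopology (popen L P)"
  unfolding istopology_def
proof (intro conjI allI impI)
  fix S T assume S: "popen L P S" and T: "popen L P T"
  show "popen L P (S \<inter> T)" unfolding popen_def
  proof (intro conjI ballI)
    show "S \<inter> T \<subseteq> L" using S unfolding popen_def by auto
    fix a assume a: "a \<in> S \<inter> T"
    obtain p e1 where p: "p \<in> P" "e1 > 0" "pball L p a e1 \<subseteq> S" using S a unfolding popen_def by blast
    obtain q e2 where q: "q \<in> P" "e2 > 0" "pball L q a e2 \<subseteq> T" using T a unfolding popen_def by blast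
    obtain r where r: "r \<in> P" "\<And>z. p z \<le> r z \<and> q z \<le> r z" using assms p(1) q(1) unfolding dirp_def by blast
    have "pball L r a (min e1 e2) \<subseteq> S \<inter> T"
    proof
      fix z assume "z \<in> pball L r a (min e1 e2)"
      then have "z \<in> L" "r (z - a) < min e1 e2" by (auto simp: pball_def)
      then have "z \<in> pball L p a e1" "z \<in> pball L q a e2" using r(2)[of "z - a"]
        by (auto simp: pball_def)
      then show "z \<in> S \<inter> T" using p q by auto
    qed
    then show "\<exists>p\<in>P. \<exists>e>0. pball L p a e \<subseteq> S \<inter> T" using r(1) p(2) q(2) by (intro bexI[of _ r] exI[of _ "min e1 e2"]) auto
  qed
next
  fix K assume K: "\<forall>S\<in>K. popen L P S"
  show "popen L P (\<Union>K)" unfolding popen_def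
  proof (intro conjI ballI)
    show "\<Union>K \<subseteq> L" using K unfolding popen_def by auto
    fix a assume "a \<in> \<Union>K"
    then obtain S where "S \<in> K" "a \<in> S" by auto
    then obtain p e where "p \<in> P" "e > 0" "pball L p a e \<subseteq> S" using K unfolding popen_def by blast
    then show "\<exists>p\<in>P. \<exists>e>0. pball L p a e \<subseteq> \<Union>K" using \<open>S \<in> K\<close> by blast
  qed
qed

lemma openin_ptop: "dirp P \<Longrightarrow> openin (ptop L P) U \<longleftrightarrow> popen L P U"
  by (simp add: ptop_def istop_popen)

lemma pball_center: "lsn p \<Longrightarrow> a \<in> L \<Longrightarrow> 0 < e \<Longrightarrow> a \<in> pball L p a e"
  by (simp add: pball_def lsn_zero)

lemma pball_open:
  assumes "dirp P" "p \<in> P" "lsn p"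
  shows "openin (ptop L P) (pball L p a e)"
  unfolding openin_ptop[OF assms(1)] popen_def
proof (intro conjI ballI)
  show "pball L p a e \<subseteq> L" by (auto simp: pball_def)
  fix b assume b: "b \<in> pball L p a e"
  then have bL: "b \<in> L" and pb: "p (b - a) < e" by (auto simp: pball_def)
  have "pball L p b (e - p (b - a)) \<subseteq> pball L p a e"
  proof
    fix z assume "z \<in> pball L p b (e - p (b - a))"
    then have "z \<in> L" "p (z - b) < e - p (b - a)" by (auto simp: pball_def)
    moreover have "p (z - a) \<le> p (z - b) + p (b - a)" by (rule lsn_tri[OF assms(3)])
    ultimately show "z \<in> pball L p a e" by (auto simp: pball_def)
  qed
  then show "\<exists>q\<in>P. \<exists>e'>0. pball L q b e' \<subseteq> pball L p a e" using assms(2) pb by (intro bexI[of _ p] exI[of _ "e - p (b - a)"]) auto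
qed

lemma topspace_ptop:
  assumes "dirp P" "P \<noteq> {}"
  shows "topspace (ptop L P) = L"
proof -
  obtain p where "p \<in> P" using assms(2) by blast
  then have "popen L P L" unfolding popen_def by (auto simp: pball_def intro!: exI[of _ 1])
  then have "openin (ptop L P) L" using openin_ptop[OF assms(1)] by blast
  then have "L \<subseteq> topspace (ptop L P)" by (rule openin_subset)
  moreover have "topspace (ptop L P) \<subseteq> L"
    using openin_topspace[of "ptop L P"] openin_ptop[OF assms(1)] unfolding popen_def by blast
  ultimately show ?thesis by blast
qed

lemma ideal_latD:
  assumes "ideal_lat L"
  shows "0 \<in> L" "a \<in> L \<Longrightarrow> b \<in> L \<Longrightarrow> a + b \<in> L" "a \<in> L \<Longrightarrow> c *\<^sub>R a \<in> L"
    "a \<in> L \<Longrightarrow> \<bar>z\<bar> \<le> \<bar>a\<bar> \<Longrightarrow> z \<in> L" "a \<in> L \<Longrightarrow> b \<in> L \<Longrightarrow> a - b \<in> L"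
proof -
  show "0 \<in> L" "a \<in> L \<Longrightarrow> b \<in> L \<Longrightarrow> a + b \<in> L" "a \<in> L \<Longrightarrow> c *\<^sub>R a \<in> L"
    "a \<in> L \<Longrightarrow> \<bar>z\<bar> \<le> \<bar>a\<bar> \<Longrightarrow> z \<in> L"
    using assms unfolding ideal_lat_def solid_in_def by auto
  assume "a \<in> L" "b \<in> L"
  then have "a + (-1) *\<^sub>R b \<in> L" using assms unfolding ideal_lat_def by blast
  then show "a - b \<in> L" by simp
qed



locale ptsetup =
  fixes L :: "'a::banach_lattice set" and P :: "('a \<Rightarrow> real) set"
  assumes ideal: "ideal_lat L" and ne: "P \<noteq> {}" and lsnP: "\<And>p. p \<in> P \<Longrightarrow> lsn p"
    and dir: "dirp P" and sep: "\<And>z. z \<in> L \<Longrightarrow> z \<noteq> 0 \<Longrightarrow> \<exists>p\<in>P. 0 < p z"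
begin

lemma openT: "openin (ptop L P) U \<longleftrightarrow> popen L P U" using openin_ptop[OF dir] .
lemma topT: "topspace (ptop L P) = L" using topspace_ptop[OF dir ne] .
lemma ballT: "p \<in> P \<Longrightarrow> openin (ptop L P) (pball L p a e)" using pball_open[OF dir _ lsnP] by blast

end

context ptsetup begin
lemma hausdorff: "Hausdorff_space (ptop L P)"
  unfolding Hausdorff_space_def topT
proof (intro allI impI)
  fix a b assume h: "a \<in> L \<and> b \<in> L \<and> a \<noteq> b"
  then have "a - b \<in> L" "a - b \<noteq> 0" using ideal_latD(5)[OF ideal] by auto
  then obtain p where p: "p \<in> P" "0 < p (a - b)" using sep by blast
  have lp: "lsn p" using lsnP p(1) .
  define e where "e = p (a - b) / 2"
  have e: "0 < e" using p by (simp add: e_def)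
  have dj: "disjnt (pball L p a e) (pball L p b e)"
    unfolding disjnt_iff
  proof (intro allI notI)
    fix z assume "z \<in> pball L p a e \<and> z \<in> pball L p b e"
    then have z: "p (z - a) < e" "p (z - b) < e" by (auto simp: pball_def)
    have "p (a - b) \<le> p (a - z) + p (z - b)" by (rule lsn_tri[OF lp])
    moreover have "p (a - z) = p (z - a)" by (rule lsn_commute[OF lp])
    ultimately show False using z by (simp add: e_def)
  qed
  show "\<exists>U V. openin (ptop L P) U \<and> openin (ptop L P) V \<and> a \<in> U \<and> b \<in> V \<and> disjnt U V"
  proof (rule exI[of _ "pball L p a e"], rule exI[of _ "pball L p b e"], intro conjI conjI)
    show "openin (ptop L P) (pball L p a e)" "openin (ptop L P) (pball L p b e)" by (rule ballT[OF p(1)])+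
    show "a \<in> pball L p a e" "b \<in> pball L p b e" using pball_center[OF lp] h e by auto
  qed (rule dj)
qed

end

context ptsetup begin
lemma add_cont: "continuous_map (prod_topology (ptop L P) (ptop L P)) (ptop L P) (\<lambda>(a,b). a+b)"
  unfolding continuous_map_def topspace_prod_topology topT
proof (intro conjI allI impI)
  show "(\<lambda>(a,b). a+b) \<in> L \<times> L \<rightarrow> L" using ideal_latD(2)[OF ideal] by auto
  fix U assume U: "openin (ptop L P) U"
  show "openin (prod_topology (ptop L P) (ptop L P)) {x \<in> L \<times> L. (\<lambda>(a,b). a+b) x \<in> U}"
    unfolding openin_prod_topology_alt
  proof (intro allI impI)
    fix a b assume ab: "(a,b) \<in> {x \<in> L \<times> L. (\<lambda>(a,b). a+b) x \<in> U}"
    then have aL: "a\<in>L" "b\<in>L" "a+b \<in> U" by auto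
    obtain p e where p: "p\<in>P" "e>0" "pball L p (a+b) e \<subseteq> U" using U aL(3) unfolding openT popen_def by blast
    have lp: "lsn p" using lsnP p(1) .
    have sub: "pball L p a (e/2) \<times> pball L p b (e/2) \<subseteq> {x \<in> L \<times> L. (\<lambda>(a,b). a+b) x \<in> U}"
    proof
      fix x assume "x \<in> pball L p a (e/2) \<times> pball L p b (e/2)"
      then obtain z w where x: "x = (z,w)" "z \<in> pball L p a (e/2)" "w \<in> pball L p b (e/2)" by blast
      then have zL: "z\<in>L" "w\<in>L" "p (z-a) < e/2" "p (w-b) < e/2" by (auto simp: pball_def)
      have "p ((z+w) - (a+b)) \<le> p (z-a) + p (w-b)" using lsnD(2)[OF lp, of "z-a" "w-b"] by (simp add: algebra_simps)
      then have "z + w \<in> pball L p (a+b) e" using zL ideal_latD(2)[OF ideal] by (auto simp: pball_def)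
      then show "x \<in> {x \<in> L \<times> L. (\<lambda>(a,b). a+b) x \<in> U}" using p(3) x zL by auto
    qed
    show "\<exists>A B. openin (ptop L P) A \<and> openin (ptop L P) B \<and> a \<in> A \<and> b \<in> B \<and> A \<times> B \<subseteq> {x \<in> L \<times> L. (\<lambda>(a,b). a+b) x \<in> U}"
      apply (rule exI[of _ "pball L p a (e/2)"], rule exI[of _ "pball L p b (e/2)"])
      using ballT[OF p(1)] pball_center[OF lp] aL p(2) sub by auto
  qed
qed

end

context ptsetup begin
lemma smul_cont: "continuous_map (prod_topology euclideanreal (ptop L P)) (ptop L P) (\<lambda>(c,a). c *\<^sub>R a)"
  unfolding continuous_map_def topspace_prod_topology topT topspace_euclidean
proof (intro conjI allI impI)
  show "(\<lambda>(c,a). c *\<^sub>R a) \<in> UNIV \<times> L \<rightarrow> L" using ideal_latD(3)[OF ideal] by auto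
  fix U assume U: "openin (ptop L P) U"
  show "openin (prod_topology euclideanreal (ptop L P)) {x \<in> UNIV \<times> L. (\<lambda>(c,a). c *\<^sub>R a) x \<in> U}"
    unfolding openin_prod_topology_alt
  proof (intro allI impI)
    fix c a assume ab: "(c,a) \<in> {x \<in> UNIV \<times> L. (\<lambda>(c,a). c *\<^sub>R a) x \<in> U}"
    then have aL: "a\<in>L" "c *\<^sub>R a \<in> U" by auto
    obtain p e where p: "p\<in>P" "e>0" "pball L p (c *\<^sub>R a) e \<subseteq> U" using U aL(2) unfolding openT popen_def by blast
    have lp: "lsn p" using lsnP p(1) .
    define K where "K = \<bar>c\<bar> + 2"
    define na where "na = norm a"
    define d where "d = min 1 (e / (2 * (na + 1)))"
    have K: "0 < K" by (simp add: K_def)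
    have na: "0 \<le> na" by (simp add: na_def)
    have d: "0 < d" "d \<le> 1" "d \<le> e / (2 * (na + 1))" using p(2) na by (auto simp: d_def)
    have sub: "ball c d \<times> pball L p a (e/(2*K)) \<subseteq> {x \<in> UNIV \<times> L. (\<lambda>(c,a). c *\<^sub>R a) x \<in> U}"
    proof
      fix x assume "x \<in> ball c d \<times> pball L p a (e/(2*K))"
      then obtain c' z where x: "x = (c',z)" "c' \<in> ball c d" "z \<in> pball L p a (e/(2*K))" by blast
      then have zL: "z\<in>L" "p (z-a) < e/(2*K)" "\<bar>c - c'\<bar> < d" by (auto simp: pball_def dist_real_def)
      have eq: "c' *\<^sub>R z - c *\<^sub>R a = c' *\<^sub>R (z - a) + (c' - c) *\<^sub>R a" by (simp add: algebra_simps)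
      have "p (c' *\<^sub>R z - c *\<^sub>R a) \<le> p (c' *\<^sub>R (z - a)) + p ((c' - c) *\<^sub>R a)"
        unfolding eq by (rule lsnD(2)[OF lp])
      also have "\<dots> \<le> (\<bar>c'\<bar>+1) * p (z - a) + norm ((c' - c) *\<^sub>R a)"
        by (intro add_mono lsnD(5)[OF lp] lsnD(4)[OF lp])
      finally have A: "p (c' *\<^sub>R z - c *\<^sub>R a) \<le> (\<bar>c'\<bar>+1) * p (z - a) + \<bar>c - c'\<bar> * na"
        by (simp add: na_def abs_minus_commute)
      have c1: "\<bar>c'\<bar>+1 \<le> K" using zL(3) d(2) unfolding K_def by linarith
      have B: "(\<bar>c'\<bar>+1) * p (z - a) < e/2"
      proof -
        have "(\<bar>c'\<bar>+1) * p (z - a) \<le> K * p (z - a)" using c1 lsnD(1)[OF lp] by (intro mult_right_mono) auto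
        also have "\<dots> < K * (e/(2*K))" using zL(2) K by (intro mult_strict_left_mono) auto
        also have "\<dots> = e/2" using K by simp
        finally show ?thesis .
      qed
      have C: "\<bar>c - c'\<bar> * na < e/2"
      proof (cases "na = 0")
        case True then show ?thesis using p(2) by simp
      next
        case False
        then have nap: "0 < na" using na by simp
        have "\<bar>c - c'\<bar> * na < d * na" using zL(3) nap by (intro mult_strict_right_mono) auto
        also have "\<dots> \<le> e / (2 * (na + 1)) * na" using d(3) na by (intro mult_right_mono) auto
        also have "\<dots> \<le> e / 2"
        proof -
          have "e / (2 * (na + 1)) * na = (e/2) * (na / (na + 1))" using na by (simp add: field_simps)
          also have "\<dots> \<le> (e/2) * 1" using na p(2) by (intro mult_left_mono) auto
          finally show ?thesis by simp
        qed
        finally show ?thesis .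
      qed
      have "c' *\<^sub>R z \<in> pball L p (c *\<^sub>R a) e" using A B C zL(1) ideal_latD(3)[OF ideal] by (auto simp: pball_def)
      then show "x \<in> {x \<in> UNIV \<times> L. (\<lambda>(c,a). c *\<^sub>R a) x \<in> U}" using p(3) x zL by auto
    qed
    have ob: "openin euclideanreal (ball c d)" using open_ball open_openin by blast
    show "\<exists>A B. openin euclideanreal A \<and> openin (ptop L P) B \<and> c \<in> A \<and> a \<in> B \<and> A \<times> B \<subseteq> {x \<in> UNIV \<times> L. (\<lambda>(c,a). c *\<^sub>R a) x \<in> U}"
      apply (rule exI[of _ "ball c d"], rule exI[of _ "pball L p a (e/(2*K))"])
      using ob ballT[OF p(1)] pball_center[OF lp] aL p(2) sub d(1) K by auto
  qed
qed

end

context ptsetup begin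
lemma locsolid: "locally_solid_on L (ptop L P)"
  unfolding locally_solid_on_def linear_topology_on_def
proof (intro conjI allI impI topT hausdorff add_cont smul_cont)
  fix U assume U: "openin (ptop L P) U \<and> 0 \<in> U"
  obtain p e where p: "p\<in>P" "e>0" "pball L p 0 e \<subseteq> U" using U unfolding openT popen_def by blast
  have lp: "lsn p" using lsnP p(1) .
  have so: "solid_in L (pball L p 0 e)"
    unfolding solid_in_def pball_def using lsnD(3)[OF lp] by fastforce
  have z0: "0 \<in> pball L p 0 e" using pball_center[OF lp ideal_latD(1)[OF ideal] p(2)] .
  show "\<exists>S V. solid_in L S \<and> openin (ptop L P) V \<and> 0 \<in> V \<and> V \<subseteq> S \<and> S \<subseteq> U"
    apply (rule exI[of _ "pball L p 0 e"], rule exI[of _ "pball L p 0 e"])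
    using so z0 ballT[OF p(1)] p(3) by auto
qed

end

context ptsetup begin
lemma metric_single:
  assumes "P = {p}" shows "metrizable_space (ptop L P)"
proof -
  have lp: "lsn p" using lsnP assms by auto
  interpret M: Metric_space L "\<lambda>a b. p (a - b)"
  proof
    show "0 \<le> p (x - y)" for x y using lsnD(1)[OF lp] .
    show "p (x - y) = p (y - x)" for x y using lsn_commute[OF lp] .
    show "p (x - z) \<le> p (x - y) + p (y - z)" for x y z using lsn_tri[OF lp] .
    show "(p (x - y) = 0) = (x = y)" if "x \<in> L" "y \<in> L" for x y
    proof
      assume h: "p (x - y) = 0"
      show "x = y"
      proof (rule ccontr)
        assume "x \<noteq> y"
        then have "x - y \<in> L" "x - y \<noteq> 0" using that ideal_latD(5)[OF ideal] by auto
        then show False using sep assms h by fastforce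
      qed
    qed (simp add: lsn_zero[OF lp])
  qed
  have "popen L P = M.mopen"
  proof (rule ext)
    fix U
    have mb: "M.mball a r = pball L p a r" if "a \<in> L" for a r
      using that lsn_commute[OF lp] by (auto simp: M.mball_def pball_def)
    show "popen L P U = M.mopen U"
    proof (cases "U \<subseteq> L")
      case True
      then have mbU: "\<And>a r. a \<in> U \<Longrightarrow> M.mball a r = pball L p a r" using mb by blast
      show ?thesis unfolding popen_def M.mopen_def assms using True by (simp add: mbU Ball_def)
    next
      case False
      then show ?thesis unfolding popen_def M.mopen_def by simp
    qed
  qed
  then have "ptop L P = M.mtopology" by (simp add: ptop_def M.mtopology_def)
  then show ?thesis using M.metrizable_space_mtopology by simp
qed

end

lemma coarser:
  assumes "ptsetup L P'" "ptsetup UNIV P" "P' \<subseteq> P" "openin (ptop L P') U"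
  shows "openin (subtopology (ptop UNIV P) L) U"
proof -
  have U: "popen L P' U" using assms(4) ptsetup.openT[OF assms(1)] by blast
  then have UL: "U \<subseteq> L" and ex: "\<forall>a\<in>U. \<exists>p\<in>P'. \<exists>e>0. pball L p a e \<subseteq> U" unfolding popen_def by auto
  obtain pf ef where pf: "\<forall>a\<in>U. pf a \<in> P' \<and> ef a > 0 \<and> pball L (pf a) a (ef a) \<subseteq> U" using ex by metis
  define T where "T = \<Union>((\<lambda>a. pball UNIV (pf a) a (ef a)) ` U)"
  have "openin (ptop UNIV P) T" unfolding T_def
    using ptsetup.ballT[OF assms(2)] pf assms(3) by blast
  moreover have "U = T \<inter> L"
  proof
    show "U \<subseteq> T \<inter> L"
    proof
      fix a assume a: "a \<in> U"
      have "lsn (pf a)" using ptsetup.lsnP[OF assms(1)] pf a by blast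
      then have "a \<in> pball UNIV (pf a) a (ef a)" using pball_center pf a by blast
      then show "a \<in> T \<inter> L" using a UL T_def by auto
    qed
    show "T \<inter> L \<subseteq> U"
    proof
      fix z assume "z \<in> T \<inter> L"
      then obtain a where a: "a \<in> U" "z \<in> pball UNIV (pf a) a (ef a)" "z \<in> L" unfolding T_def by auto
      then have "z \<in> pball L (pf a) a (ef a)" by (auto simp: pball_def)
      then show "z \<in> U" using pf a by blast
    qed
  qed
  ultimately show ?thesis unfolding openin_subtopology by blast
qed

lemma pos_closed:
  fixes s :: "nat \<Rightarrow> 'a::banach_lattice"
  assumes "s \<longlonglongrightarrow> l" "\<forall>n. 0 \<le> s n" shows "0 \<le> l"
proof -
  have "(\<lambda>n. \<bar>s n\<bar>) \<longlonglongrightarrow> \<bar>l\<bar>"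
    unfolding LIMSEQ_iff
  proof (intro allI impI)
    fix r :: real assume "0 < r"
    then obtain no where no: "\<forall>n\<ge>no. norm (s n - l) < r" using assms(1) unfolding LIMSEQ_iff by blast
    have "norm (\<bar>s n\<bar> - \<bar>l\<bar>) \<le> norm (s n - l)" for n
      by (intro norm_lattice_mono abs_triangle_ineq3)
    then show "\<exists>no. \<forall>n\<ge>no. norm (\<bar>s n\<bar> - \<bar>l\<bar>) < r" using no by (meson order.strict_trans1)
  qed
  moreover have "(\<lambda>n. \<bar>s n\<bar>) = s" using assms(2) by (simp add: abs_of_nonneg)
  ultimately have "\<bar>l\<bar> = l" using assms(1) LIMSEQ_unique by metis
  then show ?thesis by (metis abs_ge_zero)
qed

lemma abs_le_of_interval:
  fixes a b x :: "'a::banach_lattice"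
  assumes "0 \<le> a" "a \<le> x" "0 \<le> b" "b \<le> x"
  shows "\<bar>a - b\<bar> \<le> x"
proof -
  have "a - b \<le> x" using assms by (metis diff_le_eq add_increasing2 order.trans)
  moreover have "-(a - b) \<le> x" using assms by (metis minus_diff_eq diff_le_eq add_increasing2 order.trans)
  ultimately show ?thesis by (simp add: abs_lattice)
qed

lemma (in ptsetup) cauchy_single:
  assumes "P = {p}" "x \<in> L" "0 \<le> x" "\<And>v. \<bar>v\<bar> \<le> x \<Longrightarrow> p v = norm v"
  shows "\<forall>s. (\<forall>n. s n \<in> {0..x}) \<and> top_cauchy (ptop L P) s \<longrightarrow> (\<exists>l\<in>{0..x}. limitin (ptop L P) s l sequentially)"
proof (intro allI impI)
  fix s assume h: "(\<forall>n. s n \<in> {0..x}) \<and> top_cauchy (ptop L P) s"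
  have lp: "lsn p" using lsnP assms(1) by auto
  have s0: "0 \<le> s n" "s n \<le> x" for n using h by auto
  have inL: "y \<in> L" if "0 \<le> y" "y \<le> x" for y
    using ideal_latD(4)[OF ideal assms(2), of y] that assms(3) by (simp add: abs_of_nonneg)
  have dif: "\<bar>s m - s n\<bar> \<le> x" for m n using abs_le_of_interval s0 by blast
  have "Cauchy s"
  proof (rule CauchyI)
    fix e :: real assume "0 < e"
    have "openin (ptop L P) (pball L p 0 e)" using ballT assms(1) by auto
    moreover have "0 \<in> pball L p 0 e" using pball_center[OF lp ideal_latD(1)[OF ideal] \<open>0<e\<close>] .
    ultimately obtain N where "\<forall>m\<ge>N. \<forall>n\<ge>N. s m - s n \<in> pball L p 0 e" using h unfolding top_cauchy_def by blast
    then have "\<forall>m\<ge>N. \<forall>n\<ge>N. norm (s m - s n) < e" using assms(4)[OF dif] by (auto simp: pball_def)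
    then show "\<exists>M. \<forall>m\<ge>M. \<forall>n\<ge>M. norm (s m - s n) < e" by blast
  qed
  then obtain l where l: "s \<longlonglongrightarrow> l" using Cauchy_convergent_iff convergent_def by blast
  have l0: "0 \<le> l" using pos_closed[OF l] s0 by blast
  have "(\<lambda>n. x - s n) \<longlonglongrightarrow> x - l" using l by (intro tendsto_intros)
  then have lx: "l \<le> x" using pos_closed[of "\<lambda>n. x - s n" "x - l"] s0 by simp
  have lL: "l \<in> L" using inL l0 lx by blast
  have "limitin (ptop L P) s l sequentially"
    unfolding limitin_def topT
  proof (intro conjI allI impI lL)
    fix U assume U: "openin (ptop L P) U \<and> l \<in> U"
    obtain e where e: "e>0" "pball L p l e \<subseteq> U" using U assms(1) unfolding openT popen_def by blast
    obtain no where no: "\<forall>n\<ge>no. norm (s n - l) < e" using l e(1) unfolding LIMSEQ_iff by blast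
    have "\<forall>n\<ge>no. s n \<in> U"
    proof (intro allI impI)
      fix n assume "no \<le> n"
      then have "p (s n - l) < e" using no lsnD(4)[OF lp, of "s n - l"] by force
      then have "s n \<in> pball L p l e" using inL s0 by (auto simp: pball_def)
      then show "s n \<in> U" using e by blast
    qed
    then show "\<forall>\<^sub>F n in sequentially. s n \<in> U" unfolding eventually_sequentially by blast
  qed
  then show "\<exists>l\<in>{0..x}. limitin (ptop L P) s l sequentially" using l0 lx by auto
qed



definition dcomp :: "'a::banach_lattice set \<Rightarrow> 'a set" where
  "dcomp S = {z. \<forall>w\<in>S. inf \<bar>z\<bar> \<bar>w\<bar> = 0}"

lemma inf_abs_nonneg: fixes a b :: "'a::banach_lattice" shows "0 \<le> inf \<bar>a\<bar> \<bar>b\<bar>"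
  by simp

lemma disj_sup:
  fixes D :: "'a::banach_lattice set"
  assumes D: "\<forall>d\<in>D. inf \<bar>d\<bar> ww = 0" and ww: "0 \<le> ww" and ub: "\<forall>d\<in>D. d \<le> s"
    and lub: "\<forall>u. (\<forall>d\<in>D. d \<le> u) \<longrightarrow> s \<le> u"
  shows "inf \<bar>s\<bar> ww = 0"
proof (cases "D = {}")
  case True
  then have "s \<le> s - \<bar>s\<bar>" using lub by blast
  then have "\<bar>s\<bar> \<le> 0" by (simp add: le_diff_eq)
  then have "s = 0" by simp
  then show ?thesis using ww by (simp add: inf_absorb1)
next
  case False
  then obtain d0 where d0: "d0 \<in> D" by blast
  have negle: "- nprt s \<le> \<bar>d0\<bar>"
  proof -
    have "nprt d0 \<le> nprt s" using ub d0 by simp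
    then have "- nprt s \<le> - nprt d0" by simp
    also have "\<dots> \<le> \<bar>d0\<bar>" by (simp add: abs_prts)
    finally show ?thesis .
  qed
  have negpos: "0 \<le> - nprt s" by simp
  have neg: "inf (- nprt s) ww = 0"
  proof (rule order.antisym)
    have "inf (- nprt s) ww \<le> inf \<bar>d0\<bar> ww" using negle by (rule inf_mono) simp
    then show "inf (- nprt s) ww \<le> 0" using D d0 by simp
    show "0 \<le> inf (- nprt s) ww" using negpos ww by simp
  qed
  define u where "u = sup (pprt s) ww - ww"
  have "d \<le> u" if d: "d \<in> D" for d
  proof -
    have "pprt d \<le> \<bar>d\<bar>" by (simp add: abs_prts)
    then have "inf (pprt d) ww \<le> inf \<bar>d\<bar> ww" by (rule inf_mono) simp
    then have i0: "inf (pprt d) ww = 0" using D d ww by (simp add: order.antisym)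
    have "pprt d + ww = sup (pprt d) ww + inf (pprt d) ww" by (rule add_eq_inf_sup)
    then have e: "pprt d = sup (pprt d) ww - ww" using i0 by (simp add: algebra_simps)
    have "d \<le> pprt d" by (simp add: pprt_def)
    also have "\<dots> = sup (pprt d) ww - ww" by (rule e)
    also have "\<dots> \<le> sup (pprt s) ww - ww" using ub d by (intro diff_right_mono sup_mono pprt_mono) auto
    finally show ?thesis by (simp add: u_def)
  qed
  then have su: "s \<le> u" using lub by blast
  have u0: "0 \<le> u" by (simp add: u_def)
  have "pprt s \<le> u" using su u0 by (simp add: pprt_def)
  then have "pprt s + ww \<le> sup (pprt s) ww" by (simp add: u_def le_diff_eq)
  moreover have "pprt s + ww = sup (pprt s) ww + inf (pprt s) ww" by (rule add_eq_inf_sup)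
  ultimately have "inf (pprt s) ww \<le> 0" by simp
  then have pos: "inf (pprt s) ww = 0" using ww by (simp add: order.antisym)
  have "inf \<bar>s\<bar> ww = inf (pprt s + (- nprt s)) ww" by (simp add: abs_prts)
  also have "\<dots> \<le> inf (pprt s) ww + inf (- nprt s) ww" by (intro inf_add_le ww) simp_all
  finally have "inf \<bar>s\<bar> ww \<le> 0" using pos neg by simp
  then show ?thesis using ww by (simp add: order.antisym)
qed


lemma dcomp_band: "is_band (dcomp S)"
  unfolding is_band_def ideal_lat_def solid_in_def
proof (intro conjI ballI allI impI)
  show "0 \<in> dcomp S" by (simp add: dcomp_def inf_absorb1)
next
  fix a b assume a: "a \<in> dcomp S" and b: "b \<in> dcomp S"
  show "a + b \<in> dcomp S" unfolding dcomp_def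
  proof (intro CollectI ballI)
    fix w assume w: "w \<in> S"
    have "inf \<bar>a+b\<bar> \<bar>w\<bar> \<le> inf (\<bar>a\<bar>+\<bar>b\<bar>) \<bar>w\<bar>" by (intro inf_mono abs_triangle_ineq order.refl)
    also have "\<dots> \<le> inf \<bar>a\<bar> \<bar>w\<bar> + inf \<bar>b\<bar> \<bar>w\<bar>" by (intro inf_add_le) auto
    also have "\<dots> = 0" using a b w by (simp add: dcomp_def)
    finally show "inf \<bar>a+b\<bar> \<bar>w\<bar> = 0" by (simp add: order.antisym)
  qed
next
  fix c :: real and a assume a: "a \<in> dcomp S"
  show "c *\<^sub>R a \<in> dcomp S" unfolding dcomp_def
  proof (intro CollectI ballI)
    fix w assume w: "w \<in> S"
    have "\<bar>c *\<^sub>R a\<bar> = \<bar>c\<bar> *\<^sub>R \<bar>a\<bar>" by (rule abs_scaleR_lat)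
    also have "\<dots> \<le> (\<bar>c\<bar>+1) *\<^sub>R \<bar>a\<bar>" by (intro scaleR_right_mono) auto
    finally have "inf \<bar>c *\<^sub>R a\<bar> \<bar>w\<bar> \<le> inf ((\<bar>c\<bar>+1) *\<^sub>R \<bar>a\<bar>) \<bar>w\<bar>" by (intro inf_mono order.refl)
    also have "\<dots> \<le> (\<bar>c\<bar>+1) *\<^sub>R inf \<bar>a\<bar> \<bar>w\<bar>" by (intro inf_scale_le) auto
    also have "\<dots> = 0" using a w by (simp add: dcomp_def)
    finally show "inf \<bar>c *\<^sub>R a\<bar> \<bar>w\<bar> = 0" by (simp add: order.antisym)
  qed
next
  show "dcomp S \<subseteq> UNIV" by simp
next
  fix y z assume y: "y \<in> dcomp S" and yz: "\<bar>z\<bar> \<le> \<bar>y\<bar>"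
  show "z \<in> dcomp S" unfolding dcomp_def
  proof (intro CollectI ballI)
    fix w assume w: "w \<in> S"
    have "inf \<bar>z\<bar> \<bar>w\<bar> \<le> inf \<bar>y\<bar> \<bar>w\<bar>" using yz by (intro inf_mono order.refl)
    also have "\<dots> = 0" using y w by (simp add: dcomp_def)
    finally show "inf \<bar>z\<bar> \<bar>w\<bar> = 0" by (simp add: order.antisym)
  qed
next
  fix D s assume h: "D \<subseteq> dcomp S \<and> (\<forall>d\<in>D. d \<le> s) \<and> (\<forall>u. (\<forall>d\<in>D. d \<le> u) \<longrightarrow> s \<le> u)"
  show "s \<in> dcomp S" unfolding dcomp_def
  proof (intro CollectI ballI)
    fix w assume w: "w \<in> S"
    have "\<forall>d\<in>D. inf \<bar>d\<bar> \<bar>w\<bar> = 0" using h w by (auto simp: dcomp_def)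
    then show "inf \<bar>s\<bar> \<bar>w\<bar> = 0" using disj_sup[of D "\<bar>w\<bar>" s] h by simp
  qed
qed


lemma band_gen_sub: "is_band B \<Longrightarrow> x \<in> B \<Longrightarrow> band_gen x \<subseteq> B"
  unfolding band_gen_def by blast

lemma band_gen_mem: "x \<in> band_gen x"
  unfolding band_gen_def by blast

lemma ideal_Inter:
  assumes F: "\<forall>B\<in>F. ideal_lat B" shows "ideal_lat (\<Inter>F)"
  unfolding ideal_lat_def solid_in_def
proof (intro conjI ballI allI impI)
  show "0 \<in> \<Inter>F" using F ideal_latD(1) by blast
  show "\<Inter>F \<subseteq> UNIV" by simp
  fix a assume a: "a \<in> \<Inter>F"
  show "c *\<^sub>R a \<in> \<Inter>F" for c
  proof
    fix B assume "B \<in> F" then show "c *\<^sub>R a \<in> B" using F a ideal_latD(3) by blast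
  qed
  show "b \<in> \<Inter>F \<Longrightarrow> a + b \<in> \<Inter>F" for b
  proof
    fix B assume "b \<in> \<Inter>F" "B \<in> F" then show "a + b \<in> B" using F a ideal_latD(2) by blast
  qed
  show "\<bar>z\<bar> \<le> \<bar>a\<bar> \<Longrightarrow> z \<in> \<Inter>F" for z
  proof
    fix B assume "\<bar>z\<bar> \<le> \<bar>a\<bar>" "B \<in> F" then show "z \<in> B" using F a ideal_latD(4) by blast
  qed
qed

lemma band_gen_ideal: "ideal_lat (band_gen x)"
  unfolding band_gen_def by (rule ideal_Inter) (auto simp: is_band_def)

lemma band_sep:
  fixes x z :: "'a::banach_lattice"
  assumes "z \<in> band_gen x" "inf \<bar>z\<bar> \<bar>x\<bar> = 0"
  shows "z = 0"
proof -
  let ?S = "{w. inf \<bar>w\<bar> \<bar>x\<bar> = 0}"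
  have "x \<in> dcomp ?S" unfolding dcomp_def by (simp add: inf_commute)
  then have "z \<in> dcomp ?S" using band_gen_sub[OF dcomp_band] assms(1) by blast
  moreover have "z \<in> ?S" using assms(2) by simp
  ultimately have "inf \<bar>z\<bar> \<bar>z\<bar> = 0" unfolding dcomp_def by blast
  then show ?thesis by simp
qed



lemma dirp_single: "dirp {p}" unfolding dirp_def by auto

lemma ideal_UNIV: "ideal_lat (UNIV :: 'a::banach_lattice set)"
  unfolding ideal_lat_def solid_in_def by simp

lemma dirp_pu: "dirp (range (pu :: 'a::banach_lattice \<Rightarrow> 'a \<Rightarrow> real))"
  unfolding dirp_def
proof (intro ballI)
  fix p q assume "p \<in> range (pu::'a \<Rightarrow> _)" "q \<in> range (pu::'a \<Rightarrow> _)"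
  then obtain y1 y2 where pq: "p = pu y1" "q = pu y2" by blast
  have "pu y1 z \<le> pu (\<bar>y1\<bar>+\<bar>y2\<bar>) z \<and> pu y2 z \<le> pu (\<bar>y1\<bar>+\<bar>y2\<bar>) z" for z
  proof -
    have e: "\<bar>\<bar>y1\<bar>+\<bar>y2\<bar>\<bar> = \<bar>y1\<bar>+\<bar>y2\<bar>" by (simp add: abs_of_nonneg)
    have "inf \<bar>z\<bar> \<bar>y1\<bar> \<le> inf \<bar>z\<bar> \<bar>\<bar>y1\<bar>+\<bar>y2\<bar>\<bar>" unfolding e by (intro inf_mono) auto
    then have 1: "norm (inf \<bar>z\<bar> \<bar>y1\<bar>) \<le> norm (inf \<bar>z\<bar> \<bar>\<bar>y1\<bar>+\<bar>y2\<bar>\<bar>)" by (intro norm_mono_pos) auto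
    have "inf \<bar>z\<bar> \<bar>y2\<bar> \<le> inf \<bar>z\<bar> \<bar>\<bar>y1\<bar>+\<bar>y2\<bar>\<bar>" unfolding e by (intro inf_mono) auto
    then have 2: "norm (inf \<bar>z\<bar> \<bar>y2\<bar>) \<le> norm (inf \<bar>z\<bar> \<bar>\<bar>y1\<bar>+\<bar>y2\<bar>\<bar>)" by (intro norm_mono_pos) auto
    show ?thesis using 1 2 unfolding pu_def by simp
  qed
  then show "\<exists>r\<in>range pu. \<forall>z. p z \<le> r z \<and> q z \<le> r z" using pq by blast
qed

lemma ps_norm: "ideal_lat L \<Longrightarrow> ptsetup L {norm :: 'a::banach_lattice \<Rightarrow> real}"
  by unfold_locales (auto simp: lsn_norm dirp_single)

lemma ps_un: "ptsetup (UNIV :: 'a::banach_lattice set) (range pu)"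
proof
  show "ideal_lat (UNIV :: 'a set)" by (rule ideal_UNIV)
  show "range pu \<noteq> {}" by simp
  show "lsn p" if "p \<in> range (pu :: 'a \<Rightarrow> _)" for p using that lsn_pu by blast
  show "dirp (range (pu :: 'a \<Rightarrow> _))" by (rule dirp_pu)
  fix z :: 'a assume "z \<noteq> 0"
  then have "0 < pu z z" by (simp add: pu_def norm_abs_lat)
  then show "\<exists>p\<in>range pu. 0 < p z" by blast
qed

lemma ps_bx: "0 \<le> x \<Longrightarrow> ptsetup (band_gen x) {pu (x :: 'a::banach_lattice)}"
proof
  show "ideal_lat (band_gen x)" by (rule band_gen_ideal)
  show "{pu x} \<noteq> {}" by simp
  show "lsn p" if "p \<in> {pu x}" for p using that lsn_pu by blast
  show "dirp {pu x}" by (rule dirp_single)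
  fix z :: 'a assume z: "z \<in> band_gen x" "z \<noteq> 0"
  have "pu x z \<noteq> 0"
  proof
    assume "pu x z = 0"
    then have "inf \<bar>z\<bar> \<bar>x\<bar> = 0" by (simp add: pu_def)
    then show False using band_sep z by blast
  qed
  then have "0 < pu x z" by (simp add: pu_def)
  then show "\<exists>p\<in>{pu x}. 0 < p z" by blast
qed

lemma lics_gen:
  fixes P :: "('a::banach_lattice \<Rightarrow> real) set"
  assumes PS: "ptsetup UNIV P"
    and bx: "\<And>x. 0 \<le> x \<Longrightarrow> \<exists>p\<in>P. ptsetup (band_gen x) {p} \<and> (\<forall>v. \<bar>v\<bar> \<le> x \<longrightarrow> p v = norm v)"
  shows "lics_submetrisable (ptop UNIV P)"
  unfolding lics_submetrisable_def
proof (intro conjI allI impI)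
  show "locally_solid_on UNIV (ptop UNIV P)" using ptsetup.locsolid[OF PS] .
  fix x :: 'a assume x: "0 \<le> x"
  obtain p where p: "p \<in> P" "ptsetup (band_gen x) {p}" "\<forall>v. \<bar>v\<bar> \<le> x \<longrightarrow> p v = norm v"
    using bx[OF x] by blast
  show "\<exists>\<sigma>. locally_solid_on (band_gen x) \<sigma> \<and> metrizable_space \<sigma> \<and>
             (\<forall>U. openin \<sigma> U \<longrightarrow> openin (subtopology (ptop UNIV P) (band_gen x)) U) \<and>
             (\<forall>s. (\<forall>n. s n \<in> {0..x}) \<and> top_cauchy \<sigma> s \<longrightarrow>
                  (\<exists>l\<in>{0..x}. limitin \<sigma> s l sequentially))"
  proof (rule exI[of _ "ptop (band_gen x) {p}"], intro conjI)
    show "locally_solid_on (band_gen x) (ptop (band_gen x) {p})" using ptsetup.locsolid[OF p(2)] .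
    show "metrizable_space (ptop (band_gen x) {p})" using ptsetup.metric_single[OF p(2)] by blast
    show "\<forall>U. openin (ptop (band_gen x) {p}) U \<longrightarrow> openin (subtopology (ptop UNIV P) (band_gen x)) U"
      using coarser[OF p(2) PS] p(1) by blast
    show "\<forall>s. (\<forall>n. s n \<in> {0..x}) \<and> top_cauchy (ptop (band_gen x) {p}) s \<longrightarrow>
                  (\<exists>l\<in>{0..x}. limitin (ptop (band_gen x) {p}) s l sequentially)"
      using ptsetup.cauchy_single[OF p(2) refl band_gen_mem x] p(3) by blast
  qed
qed

lemma eucl_eq: "(euclidean :: 'a::banach_lattice topology) = ptop UNIV {norm}"
  unfolding topology_eq
proof
  fix U :: "'a set"
  have pb: "pball UNIV norm a e = ball a e" for a :: 'a and e
    by (auto simp: pball_def dist_norm norm_minus_commute)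
  show "openin euclidean U \<longleftrightarrow> openin (ptop UNIV {norm}) U"
    unfolding openin_ptop[OF dirp_single] popen_def open_openin[symmetric] open_contains_ball
    by (simp add: pb)
qed

lemma un_eq: "(un_topology :: 'a::banach_lattice topology) = ptop UNIV (range pu)"
  unfolding un_topology_def ptop_def
proof (rule arg_cong[where f=topology], rule ext)
  fix U :: "'a set"
  show "(\<forall>x\<in>U. \<exists>\<epsilon>>0. \<exists>y. {z. norm (inf \<bar>z - x\<bar> \<bar>y\<bar>) < \<epsilon>} \<subseteq> U) = popen UNIV (range pu) U"
    unfolding popen_def pball_def pu_def by (auto; blast)
qed

theorem proposition3p9:
  shows "lics_submetrisable (euclidean :: 'a::banach_lattice topology) \<and>
         lics_submetrisable (un_topology :: 'a::banach_lattice topology)"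
proof
  have "lics_submetrisable (ptop UNIV {norm :: 'a \<Rightarrow> real})"
  proof (rule lics_gen[OF ps_norm[OF ideal_UNIV]])
    fix x :: 'a assume "0 \<le> x"
    show "\<exists>p\<in>{norm}. ptsetup (band_gen x) {p} \<and> (\<forall>v. \<bar>v\<bar> \<le> x \<longrightarrow> p v = norm v)"
      using ps_norm[OF band_gen_ideal] by blast
  qed
  then show "lics_submetrisable (euclidean :: 'a topology)" by (simp add: eucl_eq)
  have "lics_submetrisable (ptop UNIV (range (pu :: 'a \<Rightarrow> _)))"
  proof (rule lics_gen[OF ps_un])
    fix x :: 'a assume x: "0 \<le> x"
    have "pu x v = norm v" if "\<bar>v\<bar> \<le> x" for v
    proof -
      have "inf \<bar>v\<bar> \<bar>x\<bar> = \<bar>v\<bar>" using that x by (simp add: abs_of_nonneg inf_absorb1)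
      then show ?thesis by (simp add: pu_def norm_abs_lat)
    qed
    then show "\<exists>p\<in>range pu. ptsetup (band_gen x) {p} \<and> (\<forall>v. \<bar>v\<bar> \<le> x \<longrightarrow> p v = norm v)"
      using ps_bx[OF x] by blast
  qed
  then show "lics_submetrisable (un_topology :: 'a topology)" by (simp add: un_eq)
qed


end
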